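(* Let $\Omega\subset\mathbb{R}^n$ be open, $\omega$ a weight, and $\varphi\in\Phi_{\mathrm w}(\Omega)$. Then $\varphi$ satisfies (A2)$_\omega$ if and only if there exist a weak $\Phi$-function $\varphi_\infty:[0,\infty)\to[0,\infty]$ (independent of $x$), a function $h\in L^1(\Omega,\omega)\cap L^\infty(\Omega)$ and $\beta\in(0,1]$ such that for almost every $x\in\Omega$: $\varphi(x,\beta t)\le\varphi_\infty(t)+h(x)$ whenever $\varphi_\infty(t)\in[0,1]$, and $\varphi_\infty(\beta t)\le\varphi(x,t)+h(x)$ whenever $\varphi(x,t)\in[0,1]$.
   Context: A weight is a nonnegative locally integrable function $\omega$ on $\mathbb{R}^n$; $L^1(\Omega,\omega)$ is the set of measurable $h$ with $\int_\Omega|h|\omega\,dx<\infty$. For $p>0$, $\varphi$ satisfies (aInc)$_p$ if there is $a\ge1$ with $\varphi(x,s)/s^p\le a\,\varphi(x,t)/t^p$ for all $0<s<t$ and a.e. $x$. $\varphi:\Omega\times[0,\infty)\to[0,\infty]$ is a $\Phi$-prefunction if $x\mapsto\varphi(x,|f(x)|)$ is measurable for every measurable $f$, and for a.e. $x$ the map $t\mapsto\varphi(x,t)$ is increasing with $\varphi(x,0)=\lim_{t\to0^+}\varphi(x,t)=0$ and $\lim_{t\to\infty}\varphi(x,t)=\infty$. $\Phi_{\mathrm w}(\Omega)$ is the set of $\Phi$-prefunctions satisfying (aInc)$_1$; a weak $\Phi$-function independent of $x$ is one of these with no $x$-dependence. (A2)$_\omega$: for every $s>0$ there exist $\beta_2\in(0,1]$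 and $h\in L^1(\Omega,\omega)\cap L^\infty(\Omega)$, $h\ge0$, such that $\varphi(x,\beta_2t)\le\varphi(y,t)+h(x)+h(y)$ for a.e. $x,y\in\Omega$ whenever $\varphi(y,t)\in[0,s]$. *)

theory Defs
  imports "HOL-Analysis.Analysis"
begin

definition weight :: "('a::euclidean_space \<Rightarrow> real) \<Rightarrow> bool" where
  "weight \<omega> \<longleftrightarrow> (\<forall>x. 0 \<le> \<omega> x) \<and>
     (\<forall>K. compact K \<longrightarrow> integrable (lebesgue_on K) \<omega>)"

definition L1w_Linf :: "'a::euclidean_space set \<Rightarrow> ('a \<Rightarrow> real) \<Rightarrow> ('a \<Rightarrow> real) \<Rightarrow> bool" where
  "L1w_Linf \<Omega> \<omega> h \<longleftrightarrow> h \<in> borel_measurable (lebesgue_on \<Omega>) \<and>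
     (\<integral>\<^sup>+ x. ennreal (\<bar>h x\<bar> * \<omega> x) \<partial>(lebesgue_on \<Omega>)) < \<infinity> \<and>
     (\<exists>M. AE x in lebesgue_on \<Omega>. \<bar>h x\<bar> \<le> M)"

definition Phi_pre :: "'a::euclidean_space set \<Rightarrow> ('a \<Rightarrow> real \<Rightarrow> ennreal) \<Rightarrow> bool" where
  "Phi_pre \<Omega> \<phi> \<longleftrightarrow>
     (\<forall>f. f \<in> borel_measurable (lebesgue_on \<Omega>) \<longrightarrow>
        (\<lambda>x. \<phi> x \<bar>f x\<bar>) \<in> borel_measurable (lebesgue_on \<Omega>)) \<and>
     (AE x in lebesgue_on \<Omega>. mono_on {0..} (\<phi> x) \<and> \<phi> x 0 = 0 \<and>
        (\<phi> x \<longlongrightarrow> 0) (at_right 0) \<and> (\<phi> x \<longlongrightarrow> \<infinity>) at_top)"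

definition aInc :: "real \<Rightarrow> 'a::euclidean_space set \<Rightarrow> ('a \<Rightarrow> real \<Rightarrow> ennreal) \<Rightarrow> bool" where
  "aInc p \<Omega> \<phi> \<longleftrightarrow> (\<exists>a\<ge>1. AE x in lebesgue_on \<Omega>. \<forall>s t. 0 < s \<and> s < t \<longrightarrow>
       \<phi> x s / ennreal (s powr p) \<le> ennreal a * (\<phi> x t / ennreal (t powr p)))"

definition Phi_w :: "'a::euclidean_space set \<Rightarrow> ('a \<Rightarrow> real \<Rightarrow> ennreal) \<Rightarrow> bool" where
  "Phi_w \<Omega> \<phi> \<longleftrightarrow> Phi_pre \<Omega> \<phi> \<and> aInc 1 \<Omega> \<phi>"

definition weak_Phi_const :: "(real \<Rightarrow> ennreal) \<Rightarrow> bool" where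
  "weak_Phi_const \<psi> \<longleftrightarrow> mono_on {0..} \<psi> \<and> \<psi> 0 = 0 \<and>
     (\<psi> \<longlongrightarrow> 0) (at_right 0) \<and> (\<psi> \<longlongrightarrow> \<infinity>) at_top \<and>
     (\<exists>a\<ge>1. \<forall>s t. 0 < s \<and> s < t \<longrightarrow> \<psi> s / ennreal s \<le> ennreal a * (\<psi> t / ennreal t))"

definition A2w :: "'a::euclidean_space set \<Rightarrow> ('a \<Rightarrow> real) \<Rightarrow> ('a \<Rightarrow> real \<Rightarrow> ennreal) \<Rightarrow> bool" where
  "A2w \<Omega> \<omega> \<phi> \<longleftrightarrow> (\<forall>s>0. \<exists>\<beta>2 h. 0 < \<beta>2 \<and> \<beta>2 \<le> 1 \<and> L1w_Linf \<Omega> \<omega> h \<and> (\<forall>x. 0 \<le> h x) \<and>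
     (AE z in (lebesgue_on \<Omega> \<Otimes>\<^sub>M lebesgue_on \<Omega>). \<forall>t\<ge>0.
        \<phi> (snd z) t \<le> ennreal s \<longrightarrow>
        \<phi> (fst z) (\<beta>2 * t) \<le> \<phi> (snd z) t + ennreal (h (fst z)) + ennreal (h (snd z))))"

end

theory Submission
  imports Defs
begin

lemma sigma_finite_lebesgue: "sigma_finite_measure (lebesgue :: 'a::euclidean_space measure)"
proof
  show "\<exists>A. countable A \<and> A \<subseteq> sets (lebesgue::'a measure) \<and> \<Union> A = space lebesgue \<and> (\<forall>a\<in>A. emeasure lebesgue a \<noteq> \<infinity>)"
  proof (intro exI conjI)
    show "countable (range (\<lambda>n::nat. cball (0::'a) (real n)))" by simp
    show "range (\<lambda>n::nat. cball (0::'a) (real n)) \<subseteq> sets lebesgue" by auto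
    show "\<Union> (range (\<lambda>n::nat. cball (0::'a) (real n))) = space lebesgue"
      by (auto simp: real_arch_simple)
    show "\<forall>a\<in>range (\<lambda>n::nat. cball (0::'a) (real n)). emeasure lebesgue a \<noteq> \<infinity>"
      apply auto subgoal for n using emeasure_lborel_cball_finite[of "0::'a" "real n"] by simp done
  qed
qed

lemma sf_on: "S \<in> sets lebesgue \<Longrightarrow> sigma_finite_measure (lebesgue_on (S::'a::euclidean_space set))"
  by (simp add: sigma_finite_lebesgue sigma_finite_measure_restrict_space)

lemma AE_prod_intro:
  assumes sf: "sigma_finite_measure M" and P: "AE x in M. P x" and Q: "AE y in M. Q y"
  shows "AE z in M \<Otimes>\<^sub>M M. P (fst z) \<and> Q (snd z)"
proof -
  interpret pair_sigma_finite M M using sf by (simp add: pair_sigma_finite_def)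
  obtain N1 where N1: "N1 \<in> null_sets M" "{x\<in>space M. \<not> P x} \<subseteq> N1" using P by (auto elim!: AE_E)
  obtain N2 where N2: "N2 \<in> null_sets M" "{x\<in>space M. \<not> Q x} \<subseteq> N2" using Q by (auto elim!: AE_E)
  have "AE z in M \<Otimes>\<^sub>M M. fst z \<notin> N1 \<and> snd z \<notin> N2"
  proof (rule AE_pair_measure)
    show "{x \<in> space (M \<Otimes>\<^sub>M M). fst x \<notin> N1 \<and> snd x \<notin> N2} \<in> sets (M \<Otimes>\<^sub>M M)"
    proof -
      have "{x \<in> space (M \<Otimes>\<^sub>M M). fst x \<notin> N1 \<and> snd x \<notin> N2} = (space M - N1) \<times> (space M - N2)"
        by (auto simp: space_pair_measure)
      then show ?thesis using N1 N2 by (auto intro!: pair_measureI)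
    qed
    show "AE x in M. AE y in M. fst (x, y) \<notin> N1 \<and> snd (x, y) \<notin> N2"
      using AE_not_in[OF N1(1)] AE_not_in[OF N2(1)] by (auto elim!: eventually_mono)
  qed
  then show ?thesis using AE_space
    by eventually_elim (use N1(2) N2(2) in \<open>fastforce simp: space_pair_measure\<close>)
qed

lemma AE_prod_elim:
  assumes sf: "sigma_finite_measure M" and R: "AE z in M \<Otimes>\<^sub>M M. R z"
  shows "AE x in M. AE y in M. R (x, y)" "AE y in M. AE x in M. R (x, y)"
proof -
  interpret pair_sigma_finite M M using sf by (simp add: pair_sigma_finite_def)
  show "AE x in M. AE y in M. R (x, y)" using AE_pair[OF R] .
  obtain N where N: "N \<in> null_sets (M \<Otimes>\<^sub>M M)" "{x\<in>space (M \<Otimes>\<^sub>M M). \<not> R x} \<subseteq> N"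
    using R by (auto elim!: AE_E)
  have "AE z in M \<Otimes>\<^sub>M M. z \<notin> N" using AE_not_in[OF N(1)] .
  then have "AE x in M. AE y in M. (x, y) \<notin> N" using AE_pair by blast
  moreover have "{x \<in> space (M \<Otimes>\<^sub>M M). (fst x, snd x) \<notin> N} \<in> sets (M \<Otimes>\<^sub>M M)"
  proof -
    have "{x \<in> space (M \<Otimes>\<^sub>M M). (fst x, snd x) \<notin> N} = space (M \<Otimes>\<^sub>M M) - N" by auto
    then show ?thesis using N(1) by auto
  qed
  ultimately have "AE y in M. AE x in M. (x, y) \<notin> N"
    using AE_commute[of "\<lambda>x y. (x, y) \<notin> N"] by blast
  moreover have "AE y in M. (AE x in M. (x, y) \<notin> N) \<longrightarrow> (AE x in M. R (x, y))"
  proof (rule AE_I2, intro impI)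
    fix y assume y: "y \<in> space M" and yN: "AE x in M. (x, y) \<notin> N"
    show "AE x in M. R (x, y)" using yN AE_space
      by eventually_elim (use N(2) y in \<open>auto simp: space_pair_measure\<close>)
  qed
  ultimately show "AE y in M. AE x in M. R (x, y)" by eventually_elim auto
qed

lemma weight_meas:
  assumes "weight (\<omega>::'a::euclidean_space \<Rightarrow> real)"
  shows "\<omega> \<in> borel_measurable lebesgue"
proof -
  let ?f = "\<lambda>n::nat. \<lambda>x. if x \<in> cball (0::'a) (real n) then \<omega> x else 0"
  have m: "?f n \<in> borel_measurable lebesgue" for n
  proof (rule borel_measurable_if_I)
    show "\<omega> \<in> borel_measurable (lebesgue_on (cball 0 (real n)))"
      using assms unfolding weight_def by (meson borel_measurable_integrable compact_cball)
  qed auto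
  have "(\<lambda>n. ?f n x) \<longlonglongrightarrow> \<omega> x" for x
  proof (rule tendsto_eventually)
    obtain N where "norm x \<le> real N" using real_arch_simple by blast
    then show "\<forall>\<^sub>F n in sequentially. ?f n x = \<omega> x"
      by (auto simp: eventually_sequentially intro!: exI[of _ N])
  qed
  then show ?thesis by (rule borel_measurable_LIMSEQ_real[OF _ m])
qed
lemma div_ennreal_eq: "0 < s \<Longrightarrow> (A::ennreal) / ennreal s = A * ennreal (1/s)"
  by (simp add: divide_ennreal_def inverse_ennreal inverse_eq_divide)

lemma ennreal_cancel1: "0 < s \<Longrightarrow> (A::ennreal) * ennreal (1/s) * ennreal s = A"
proof -
  assume s: "0 < s"
  have "ennreal (1/s) * ennreal s = 1" using s by (simp flip: ennreal_mult)
  then show ?thesis by (simp add: mult.assoc)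
qed

lemma H1:
  fixes A B :: ennreal
  assumes s: "0 < s" and t: "0 < t" and a: "0 \<le> a" and le: "A / ennreal s \<le> ennreal a * (B / ennreal t)"
  shows "A \<le> ennreal (a * s / t) * B"
proof -
  have "A * ennreal (1/s) \<le> ennreal a * (B * ennreal (1/t))"
    using le s t by (simp add: div_ennreal_eq)
  then have "A * ennreal (1/s) * ennreal s \<le> ennreal a * (B * ennreal (1/t)) * ennreal s"
    by (rule mult_right_mono) simp
  also have "ennreal a * (B * ennreal (1/t)) * ennreal s = ennreal (a * s / t) * B"
  proof -
    have "ennreal (a * s / t) = ennreal a * (ennreal s * ennreal (1/t))"
      using a s t by (simp add: ennreal_mult[symmetric])
    then show ?thesis by (simp add: mult_ac)
  qed
  finally show ?thesis using s by (simp add: ennreal_cancel1)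
qed

lemma H2:
  fixes A B :: ennreal
  assumes "0 < s" "0 < t" "0 \<le> a" "A \<le> ennreal (a * s / t) * B"
  shows "A / ennreal s \<le> ennreal a * (B / ennreal t)"
  by (metis (lifting) ext assms(1,2,3,4) divide_ennreal
    divide_le_posI_ennreal ennreal_divide_times ennreal_less_zero_iff
    ennreal_mult' less_le_not_le mult.commute mult.left_commute
    times_divide_eq_left)

lemma INF_mult_ennreal:
  assumes k: "0 < k"
  shows "ennreal k * (INF i\<in>I. f i) = (INF i\<in>I. ennreal k * f i)"
proof (rule antisym)
  show "ennreal k * (INF i\<in>I. f i) \<le> (INF i\<in>I. ennreal k * f i)"
    by (rule INF_greatest) (simp add: INF_lower mult_left_mono)
  let ?g = "(INF i\<in>I. ennreal k * f i)"
  have "?g * ennreal (1/k) \<le> f i" if "i \<in> I" for i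
  proof -
    have "?g * ennreal (1/k) \<le> ennreal k * f i * ennreal (1/k)"
      by (rule mult_right_mono) (use that in \<open>auto intro: INF_lower\<close>)
    also have "\<dots> = f i * (ennreal (1/k) * ennreal k)" by (simp add: mult_ac)
    also have "\<dots> = f i" using k by (simp flip: ennreal_mult)
    finally show ?thesis .
  qed
  then have "?g * ennreal (1/k) \<le> (INF i\<in>I. f i)" by (rule INF_greatest)
  then have "?g * ennreal (1/k) * ennreal k \<le> (INF i\<in>I. f i) * ennreal k"
    by (rule mult_right_mono) simp
  then have "?g \<le> (INF i\<in>I. f i) * ennreal k" by (simp only: ennreal_cancel1[OF k])
  then show "?g \<le> ennreal k * (INF i\<in>I. f i)" by (simp only: mult.commute)
qed

lemma scale_le:
  fixes \<psi> :: "real \<Rightarrow> ennreal"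
  assumes ainc: "\<forall>s t. 0 < s \<and> s < t \<longrightarrow> \<psi> s \<le> ennreal (a * s / t) * \<psi> t"
    and a: "1 \<le> a" and z: "\<psi> 0 = 0" and l: "0 < l" "l \<le> 1" and t: "0 \<le> t"
  shows "\<psi> (l * t) \<le> ennreal (a * l) * \<psi> t"
proof (cases "t = 0")
  case True then show ?thesis using z by simp
next
  case False
  show ?thesis
  proof (cases "l = 1")
    case True
    have "1 \<le> ennreal a" using a by simp
    then have "1 * \<psi> t \<le> ennreal a * \<psi> t" by (rule mult_right_mono) simp
    then show ?thesis using True by simp
  next
    case False
    with l \<open>t \<noteq> 0\<close> t have "0 < l * t" "l * t < t" by auto
    then have "\<psi> (l * t) \<le> ennreal (a * (l * t) / t) * \<psi> t" using ainc by blast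
    then show ?thesis using \<open>t \<noteq> 0\<close> by simp
  qed
qed

lemma tend0:
  fixes \<psi> :: "real \<Rightarrow> ennreal"
  assumes ainc: "\<forall>s t. 0 < s \<and> s < t \<longrightarrow> \<psi> s \<le> ennreal (a * s / t) * \<psi> t"
    and a: "0 \<le> a" and t1: "0 < t1" and fin: "\<psi> t1 \<noteq> \<infinity>"
  shows "(\<psi> \<longlongrightarrow> 0) (at_right 0)"
proof -
  obtain b where b: "\<psi> t1 = ennreal b" "0 \<le> b" using fin by (cases "\<psi> t1") auto
  let ?g = "\<lambda>s. ennreal (a * s * b / t1)"
  have ev: "\<forall>\<^sub>F s in at_right 0. \<psi> s \<le> ?g s"
    unfolding eventually_at_right_field
  proof (intro exI[of _ t1] conjI allI impI)
    fix s :: real assume "0 < s" "s < t1"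
    then have "\<psi> s \<le> ennreal (a * s / t1) * ennreal b" using ainc b by metis
    also have "\<dots> = ?g s" using a b \<open>0 < s\<close> t1 by (simp add: ennreal_mult[symmetric])
    finally show "\<psi> s \<le> ?g s" .
  qed (use t1 in auto)
  have "((\<lambda>s. a * s * b / t1) \<longlongrightarrow> a * 0 * b / t1) (at_right 0)"
    by (intro tendsto_intros) (use t1 in auto)
  then have "(?g \<longlongrightarrow> ennreal 0) (at_right 0)" by (intro tendsto_ennrealI) simp
  then have g: "(?g \<longlongrightarrow> 0) (at_right 0)" by simp
  show ?thesis
    by (rule tendsto_sandwich[OF _ ev tendsto_const g]) simp
qed

lemma tendtop:
  fixes \<psi> :: "real \<Rightarrow> ennreal"
  assumes ainc: "\<forall>s t. 0 < s \<and> s < t \<longrightarrow> \<psi> s \<le> ennreal (a * s / t) * \<psi> t"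
    and a: "0 < a" and t0: "0 < t0" and pos: "0 < \<psi> t0"
  shows "(\<psi> \<longlongrightarrow> \<infinity>) at_top"
proof -
  let ?g = "\<lambda>t. ennreal (t / (a * t0)) * \<psi> t0"
  have ev: "\<forall>\<^sub>F t in at_top. ?g t \<le> \<psi> t"
    unfolding eventually_at_top_dense
  proof (intro exI[of _ t0] allI impI)
    fix t assume "t0 < t"
    then have "\<psi> t0 \<le> ennreal (a * t0 / t) * \<psi> t" using ainc t0 by blast
    then have "ennreal (t / (a * t0)) * \<psi> t0 \<le> ennreal (t / (a * t0)) * (ennreal (a * t0 / t) * \<psi> t)"
      by (rule mult_left_mono) simp
    also have "\<dots> = (ennreal (t / (a * t0)) * ennreal (a * t0 / t)) * \<psi> t"
      by (simp add: mult.assoc)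
    also have "ennreal (t / (a * t0)) * ennreal (a * t0 / t) = ennreal (t / (a * t0) * (a * t0 / t))"
      by (rule ennreal_mult[symmetric]) (use a t0 \<open>t0 < t\<close> in auto)
    also have "t / (a * t0) * (a * t0 / t) = 1" using a t0 \<open>t0 < t\<close> by (simp add: field_simps)
    finally show "?g t \<le> \<psi> t" by simp
  qed
  have "filterlim (\<lambda>t. t / (a * t0)) at_top at_top"
    using a t0 by (intro filterlim_tendsto_pos_mult_at_top[OF tendsto_const _ filterlim_ident, of "1/(a*t0)", simplified]) (auto simp: field_simps)
  then have "((\<lambda>t. ennreal (t / (a * t0))) \<longlongrightarrow> \<infinity>) at_top"
    by (simp add: ennreal_tendsto_top_eq_at_top)
  then have "(?g \<longlongrightarrow> \<infinity> * \<psi> t0) at_top"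
    using pos by (intro tendsto_mult_ennreal tendsto_const) auto
  moreover have "\<psi> t0 \<noteq> 0" using pos by auto
  ultimately have g: "(?g \<longlongrightarrow> \<infinity>) at_top" by (simp add: ennreal_top_mult)
  show ?thesis
    by (rule tendsto_sandwich[OF ev _ g tendsto_const]) simp
qed

lemma dir_back:
  fixes \<Omega> :: "'a::euclidean_space set" and \<omega> :: "'a \<Rightarrow> real"
    and \<phi> :: "'a \<Rightarrow> real \<Rightarrow> ennreal" and \<psi> :: "real \<Rightarrow> ennreal"
  assumes sf: "sigma_finite_measure (lebesgue_on \<Omega>)"
    and good: "AE x in lebesgue_on \<Omega>. mono_on {0..} (\<phi> x) \<and> \<phi> x 0 = 0 \<and>
        (\<forall>s t. 0 < s \<and> s < t \<longrightarrow> \<phi> x s \<le> ennreal (a * s / t) * \<phi> x t)"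
    and a: "1 \<le> a"
    and wp: "weak_Phi_const \<psi>"
    and hL: "L1w_Linf \<Omega> \<omega> h" and hpos: "\<forall>x. 0 \<le> h x" and \<beta>: "0 < \<beta>" "\<beta> \<le> 1"
    and E: "AE x in lebesgue_on \<Omega>. \<forall>t\<ge>0.
          (\<psi> t \<le> 1 \<longrightarrow> \<phi> x (\<beta> * t) \<le> \<psi> t + ennreal (h x)) \<and>
          (\<phi> x t \<le> 1 \<longrightarrow> \<psi> (\<beta> * t) \<le> \<phi> x t + ennreal (h x))"
  shows "A2w \<Omega> \<omega> \<phi>"
  unfolding A2w_def
proof (intro allI impI)
  fix s :: real assume s: "0 < s"
  obtain b where b: "1 \<le> b" and bI: "\<forall>s t. 0 < s \<and> s < t \<longrightarrow> \<psi> s / ennreal s \<le> ennreal b * (\<psi> t / ennreal t)"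
    using wp unfolding weak_Phi_const_def by blast
  have bI': "\<forall>s t. 0 < s \<and> s < t \<longrightarrow> \<psi> s \<le> ennreal (b * s / t) * \<psi> t"
  proof (intro allI impI)
    fix s t :: real assume "0 < s \<and> s < t"
    then show "\<psi> s \<le> ennreal (b * s / t) * \<psi> t" using bI b by (intro H1) auto
  qed
  have \<psi>mono: "mono_on {0..} \<psi>" and \<psi>0: "\<psi> 0 = 0" using wp unfolding weak_Phi_const_def by auto
  obtain M where M: "AE x in lebesgue_on \<Omega>. \<bar>h x\<bar> \<le> M" using hL unfolding L1w_Linf_def by blast
  define M' where "M' = max M 0"
  have M'0: "0 \<le> M'" by (simp add: M'_def)
  define lam where "lam = min 1 (1 / (a * s))"
  define \<mu> where "\<mu> = min 1 (1 / (b * (1 + M')))"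
  have lam: "0 < lam" "lam \<le> 1" "a * lam * s \<le> 1"
    using a s by (auto simp: lam_def min_def field_simps)
  have \<mu>: "0 < \<mu>" "\<mu> \<le> 1" "b * \<mu> * (1 + M') \<le> 1"
  proof -
    have K: "0 < b * (1 + M')" using b M'0 by (simp add: add_pos_nonneg)
    show "0 < \<mu>" "\<mu> \<le> 1" using K by (auto simp: \<mu>_def)
    have "b * \<mu> * (1 + M') = (b * (1 + M')) * \<mu>" by (simp add: mult_ac)
    also have "\<dots> \<le> (b * (1 + M')) * (1 / (b * (1 + M')))"
      using K by (intro mult_left_mono) (auto simp: \<mu>_def)
    also have "\<dots> = 1" using K by (metis less_irrefl nonzero_mult_div_cancel_left mult_1_right times_divide_eq_right)
    finally show "b * \<mu> * (1 + M') \<le> 1" .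
  qed
  define \<beta>2 where "\<beta>2 = \<beta> * \<mu> * \<beta> * lam"
  show "\<exists>\<beta>2 h. 0 < \<beta>2 \<and> \<beta>2 \<le> 1 \<and> L1w_Linf \<Omega> \<omega> h \<and> (\<forall>x. 0 \<le> h x) \<and>
     (AE z in (lebesgue_on \<Omega> \<Otimes>\<^sub>M lebesgue_on \<Omega>). \<forall>t\<ge>0.
        \<phi> (snd z) t \<le> ennreal s \<longrightarrow>
        \<phi> (fst z) (\<beta>2 * t) \<le> \<phi> (snd z) t + ennreal (h (fst z)) + ennreal (h (snd z)))"
  proof (intro exI[of _ \<beta>2] exI[of _ h] conjI hL hpos)
    show "0 < \<beta>2" using \<beta> lam \<mu> by (simp add: \<beta>2_def)
    show "\<beta>2 \<le> 1" using \<beta> lam \<mu> unfolding \<beta>2_def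
      by (metis mult_le_one less_imp_le mult_nonneg_nonneg)
    have Q: "AE y in lebesgue_on \<Omega>. (\<forall>t\<ge>0.
          (\<psi> t \<le> 1 \<longrightarrow> \<phi> y (\<beta> * t) \<le> \<psi> t + ennreal (h y)) \<and>
          (\<phi> y t \<le> 1 \<longrightarrow> \<psi> (\<beta> * t) \<le> \<phi> y t + ennreal (h y))) \<and>
          (mono_on {0..} (\<phi> y) \<and> \<phi> y 0 = 0 \<and>
        (\<forall>s t. 0 < s \<and> s < t \<longrightarrow> \<phi> y s \<le> ennreal (a * s / t) * \<phi> y t)) \<and> \<bar>h y\<bar> \<le> M"
      using E good M by eventually_elim auto
    show "AE z in (lebesgue_on \<Omega> \<Otimes>\<^sub>M lebesgue_on \<Omega>). \<forall>t\<ge>0.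
        \<phi> (snd z) t \<le> ennreal s \<longrightarrow>
        \<phi> (fst z) (\<beta>2 * t) \<le> \<phi> (snd z) t + ennreal (h (fst z)) + ennreal (h (snd z))"
      using AE_prod_intro[OF sf E Q]
    proof (rule eventually_mono, intro allI impI)
      fix z :: "'a \<times> 'a" and t :: real
      let ?x = "fst z" and ?y = "snd z"
      assume H: "(\<forall>t\<ge>0. (\<psi> t \<le> 1 \<longrightarrow> \<phi> ?x (\<beta> * t) \<le> \<psi> t + ennreal (h ?x)) \<and>
          (\<phi> ?x t \<le> 1 \<longrightarrow> \<psi> (\<beta> * t) \<le> \<phi> ?x t + ennreal (h ?x))) \<and>
          (\<forall>t\<ge>0. (\<psi> t \<le> 1 \<longrightarrow> \<phi> ?y (\<beta> * t) \<le> \<psi> t + ennreal (h ?y)) \<and>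
          (\<phi> ?y t \<le> 1 \<longrightarrow> \<psi> (\<beta> * t) \<le> \<phi> ?y t + ennreal (h ?y))) \<and>
          (mono_on {0..} (\<phi> ?y) \<and> \<phi> ?y 0 = 0 \<and>
        (\<forall>s t. 0 < s \<and> s < t \<longrightarrow> \<phi> ?y s \<le> ennreal (a * s / t) * \<phi> ?y t)) \<and> \<bar>h ?y\<bar> \<le> M"
      assume t: "0 \<le> t" and ys: "\<phi> ?y t \<le> ennreal s"
      have lt: "0 \<le> lam * t" using lam t by simp
      have blt: "0 \<le> \<beta> * (lam * t)" using \<beta> lt by simp
      have s1: "\<phi> ?y (lam * t) \<le> 1"
      proof -
        have "\<phi> ?y (lam * t) \<le> ennreal (a * lam) * \<phi> ?y t"
          using H lam t a by (intro scale_le[of "\<phi> ?y" a]) auto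
        also have "\<dots> \<le> ennreal (a * lam) * ennreal s" using ys by (rule mult_left_mono) simp
        also have "\<dots> = ennreal (a * lam * s)" using a lam s by (simp add: ennreal_mult)
        also have "\<dots> \<le> 1" using lam by simp
        finally show ?thesis .
      qed
      have s2: "\<psi> (\<beta> * (lam * t)) \<le> \<phi> ?y (lam * t) + ennreal (h ?y)"
        using H s1 lt by blast
      have hy: "ennreal (h ?y) \<le> ennreal M'" using H by (auto simp: M'_def intro!: ennreal_leI)
      have s3: "\<psi> (\<mu> * (\<beta> * (lam * t))) \<le> 1"
      proof -
        have "\<psi> (\<mu> * (\<beta> * (lam * t))) \<le> ennreal (b * \<mu>) * \<psi> (\<beta> * (lam * t))"
          using bI' \<mu> blt b \<psi>0 by (intro scale_le[of \<psi> b]) auto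
        also have "\<dots> \<le> ennreal (b * \<mu>) * (1 + ennreal M')"
          using s2 s1 hy by (intro mult_left_mono) (auto intro: order_trans add_mono)
        also have "\<dots> = ennreal (b * \<mu> * (1 + M'))" using b \<mu> M'0
          by (simp add: ennreal_mult ennreal_plus)
        also have "\<dots> \<le> 1" using \<mu> by simp
        finally show ?thesis .
      qed
      have s4: "\<phi> ?x (\<beta> * (\<mu> * (\<beta> * (lam * t)))) \<le> \<psi> (\<mu> * (\<beta> * (lam * t))) + ennreal (h ?x)"
        using H s3 \<mu> blt by simp
      have s5: "\<psi> (\<mu> * (\<beta> * (lam * t))) \<le> \<psi> (\<beta> * (lam * t))"
        using \<psi>mono \<mu> blt by (intro mono_onD[OF \<psi>mono]) (auto intro: mult_left_le_one_le)
      have s6: "\<phi> ?y (lam * t) \<le> \<phi> ?y t"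
        using H lam t by (intro mono_onD[of "{0..}" "\<phi> ?y"]) (auto intro: mult_left_le_one_le)
      have "\<phi> ?x (\<beta>2 * t) = \<phi> ?x (\<beta> * (\<mu> * (\<beta> * (lam * t))))" by (simp add: \<beta>2_def mult_ac)
      also have "\<dots> \<le> \<psi> (\<beta> * (lam * t)) + ennreal (h ?x)" using s4 s5 by (meson add_right_mono order_trans)
      also have "\<dots> \<le> \<phi> ?y (lam * t) + ennreal (h ?y) + ennreal (h ?x)" using s2 by (rule add_right_mono)
      also have "\<dots> \<le> \<phi> ?y t + ennreal (h ?y) + ennreal (h ?x)" using s6 by (intro add_right_mono)
      finally show "\<phi> ?x (\<beta>2 * t) \<le> \<phi> ?y t + ennreal (h ?x) + ennreal (h ?y)" by (simp add: add_ac)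
    qed
  qed
qed

lemma dir_fwd:
  fixes \<Omega> :: "'a::euclidean_space set" and \<omega> :: "'a \<Rightarrow> real"
    and \<phi> :: "'a \<Rightarrow> real \<Rightarrow> ennreal"
  assumes sf: "sigma_finite_measure (lebesgue_on \<Omega>)"
    and \<omega>m: "\<omega> \<in> borel_measurable (lebesgue_on \<Omega>)" and \<omega>pos: "\<forall>x. 0 \<le> \<omega> x"
    and good: "AE x in lebesgue_on \<Omega>. mono_on {0..} (\<phi> x) \<and> \<phi> x 0 = 0 \<and>
        (\<phi> x \<longlongrightarrow> 0) (at_right 0) \<and> (\<phi> x \<longlongrightarrow> \<infinity>) at_top \<and>
        (\<forall>s t. 0 < s \<and> s < t \<longrightarrow> \<phi> x s \<le> ennreal (a * s / t) * \<phi> x t)"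
    and a: "1 \<le> a"
    and A2: "A2w \<Omega> \<omega> \<phi>"
    and nonnull: "emeasure (lebesgue_on \<Omega>) (space (lebesgue_on \<Omega>)) \<noteq> 0"
  shows "\<exists>\<phi>inf h \<beta>. weak_Phi_const \<phi>inf \<and> L1w_Linf \<Omega> \<omega> h \<and> (\<forall>x. 0 \<le> h x) \<and>
       0 < \<beta> \<and> \<beta> \<le> 1 \<and>
       (AE x in lebesgue_on \<Omega>. \<forall>t\<ge>0.
          (\<phi>inf t \<le> 1 \<longrightarrow> \<phi> x (\<beta> * t) \<le> \<phi>inf t + ennreal (h x)) \<and>
          (\<phi> x t \<le> 1 \<longrightarrow> \<phi>inf (\<beta> * t) \<le> \<phi> x t + ennreal (h x)))"
proof -
  let ?L = "lebesgue_on \<Omega>"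
  obtain \<beta> h where \<beta>: "0 < \<beta>" "\<beta> \<le> 1" and hL: "L1w_Linf \<Omega> \<omega> h" and hpos: "\<forall>x. 0 \<le> h x"
    and Q: "AE z in (?L \<Otimes>\<^sub>M ?L). \<forall>t\<ge>0. \<phi> (snd z) t \<le> ennreal 2 \<longrightarrow>
        \<phi> (fst z) (\<beta> * t) \<le> \<phi> (snd z) t + ennreal (h (fst z)) + ennreal (h (snd z))"
    using A2 unfolding A2w_def by (meson zero_less_numeral)
  define R where "R = (\<lambda>x y. \<forall>t\<ge>0. \<phi> y t \<le> ennreal 2 \<longrightarrow> \<phi> x (\<beta> * t) \<le> \<phi> y t + ennreal (h x) + ennreal (h y))"
  have Q': "AE z in (?L \<Otimes>\<^sub>M ?L). R (fst z) (snd z)" using Q unfolding R_def .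
  have R1: "AE x in ?L. AE y in ?L. R x y" using AE_prod_elim(1)[OF sf Q'] by simp
  have R2: "AE y in ?L. AE x in ?L. R x y" using AE_prod_elim(2)[OF sf Q'] by simp
  obtain M where M: "AE x in ?L. \<bar>h x\<bar> \<le> M" using hL unfolding L1w_Linf_def by blast
  define G where "G = (\<lambda>y. (mono_on {0..} (\<phi> y) \<and> \<phi> y 0 = 0 \<and>
        (\<phi> y \<longlongrightarrow> 0) (at_right 0) \<and> (\<phi> y \<longlongrightarrow> \<infinity>) at_top \<and>
        (\<forall>s t. 0 < s \<and> s < t \<longrightarrow> \<phi> y s \<le> ennreal (a * s / t) * \<phi> y t)) \<and>
        (AE x in ?L. R x y) \<and> (AE x in ?L. R y x) \<and> \<bar>h y\<bar> \<le> M)"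
  have AEG: "AE y in ?L. G y" using good R1 R2 M unfolding G_def by eventually_elim auto
  define S where "S = {y \<in> space ?L. G y}"
  have Sne: "S \<noteq> {}"
  proof
    assume Se: "S = {}"
    from AEG AE_space have "AE y in ?L. False" by eventually_elim (use Se in \<open>auto simp: S_def\<close>)
    then show False using nonnull
      by (metis ae_filter_eq_bot_iff eventually_False)
  qed
  define c where "c = Inf (h ` S)"
  have bdd: "bdd_below (h ` S)" using hpos by (auto intro!: bdd_belowI[of _ 0])
  have c0: "0 \<le> c" unfolding c_def using Sne hpos by (auto intro!: cInf_greatest)
  have cle: "c \<le> h y" if "y \<in> S" for y unfolding c_def using that bdd by (auto intro: cInf_lower)
  have "\<forall>n::nat. \<exists>y. y \<in> S \<and> h y < c + 1 / real (Suc n)"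
  proof
    fix n :: nat
    have "Inf (h ` S) < c + 1 / real (Suc n)" unfolding c_def by simp
    then obtain v where "v \<in> h ` S" "v < c + 1 / real (Suc n)"
      using Sne by (meson cInf_lessD image_is_empty)
    then show "\<exists>y. y \<in> S \<and> h y < c + 1 / real (Suc n)" by auto
  qed
  then obtain yn where yn: "\<And>n. yn n \<in> S" "\<And>n. h (yn n) < c + 1 / real (Suc n)" by metis
  have Gyn: "G (yn n)" for n using yn(1) by (auto simp: S_def)
  define \<Phi> where "\<Phi> = (\<lambda>t. SUP k. INF n\<in>{k..}. \<phi> (yn n) t)"
  define X where "X = (\<lambda>x. G x \<and> (\<forall>n. R x (yn n)) \<and> (\<forall>n. R (yn n) x) \<and> c \<le> h x)"
  have AEX: "AE x in ?L. X x"
  proof -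
    have "AE x in ?L. \<forall>n. R x (yn n)" using Gyn by (subst AE_all_countable) (auto simp: G_def)
    moreover have "AE x in ?L. \<forall>n. R (yn n) x" using Gyn by (subst AE_all_countable) (auto simp: G_def)
    ultimately show ?thesis using AEG AE_space
      by eventually_elim (auto simp: X_def S_def intro: cle)
  qed
  have K1: "\<phi> x (\<beta> * t) \<le> \<Phi> t + ennreal (h x + c)" if x: "X x" and t: "0 \<le> t" "\<Phi> t \<le> 1" for x t
  proof (rule ennreal_le_epsilon)
    fix e :: real assume e: "0 < e"
    obtain k where k: "inverse (real (Suc k)) < e / 2" using reals_Archimedean[of "e/2"] e
      by (metis half_gt_zero)
    define \<epsilon> where "\<epsilon> = min 1 (e / 2)"
    have \<epsilon>: "0 < \<epsilon>" "\<epsilon> \<le> 1" "\<epsilon> \<le> e / 2" using e by (auto simp: \<epsilon>_def)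
    let ?I = "INF n\<in>{k..}. \<phi> (yn n) t"
    have IP: "?I \<le> \<Phi> t" unfolding \<Phi>_def by (rule SUP_upper) simp
    then have I1: "?I \<le> 1" using t(2) by simp
    have Ifin: "?I \<noteq> \<infinity>"
    proof
      assume "?I = \<infinity>" with I1 show False by (simp add: top_unique)
    qed
    have "?I + 0 < ?I + ennreal \<epsilon>" using Ifin \<epsilon>(1)
      by (subst ennreal_add_left_cancel_less) simp
    then have "?I < ?I + ennreal \<epsilon>" by simp
    then obtain n where n: "n \<ge> k" "\<phi> (yn n) t < ?I + ennreal \<epsilon>"
      using INF_less_iff[THEN iffD1] by blast
    have "?I + ennreal \<epsilon> \<le> 1 + 1" using I1 \<epsilon> by (intro add_mono) auto
    then have le2: "\<phi> (yn n) t \<le> ennreal 2" using n(2) by (simp add: one_add_one)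
    have "1 / real (Suc n) \<le> 1 / real (Suc k)"
      using n(1) by (intro divide_left_mono) auto
    then have hn: "h (yn n) < c + e / 2" using yn(2)[of n] k by (simp add: inverse_eq_divide)
    have "\<phi> x (\<beta> * t) \<le> \<phi> (yn n) t + ennreal (h x) + ennreal (h (yn n))"
    proof -
      have "R x (yn n)" using x by (simp add: X_def)
      then show ?thesis using t le2 unfolding R_def by blast
    qed
    also have "\<dots> = \<phi> (yn n) t + ennreal (h x + h (yn n))"
      using hpos by (simp add: ennreal_plus add.assoc)
    also have "\<dots> \<le> (?I + ennreal \<epsilon>) + ennreal (h x + h (yn n))"
      using n(2) by (intro add_right_mono) simp
    also have "\<dots> = ?I + (ennreal \<epsilon> + ennreal (h x + h (yn n)))" by (simp only: add.assoc)
    also have "\<dots> \<le> \<Phi> t + (ennreal \<epsilon> + ennreal (h x + h (yn n)))" using IP by (rule add_right_mono)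
    also have "\<Phi> t + (ennreal \<epsilon> + ennreal (h x + h (yn n))) = \<Phi> t + ennreal (\<epsilon> + (h x + h (yn n)))"
      by (subst ennreal_plus[symmetric]) (use \<epsilon> hpos in \<open>auto intro: add_nonneg_nonneg\<close>)
    also have "\<dots> \<le> \<Phi> t + ennreal (h x + c + e)"
      using hn \<epsilon> by (intro add_left_mono ennreal_leI) simp
    also have "\<dots> = \<Phi> t + ennreal (h x + c) + ennreal e"
      using hpos c0 e by (simp add: ennreal_plus add.assoc add_nonneg_nonneg)
    finally show "\<phi> x (\<beta> * t) \<le> \<Phi> t + ennreal (h x + c) + ennreal e" .
  qed
  have K2: "\<Phi> (\<beta> * t) \<le> \<phi> x t + ennreal (h x + c)" if x: "X x" and t: "0 \<le> t" "\<phi> x t \<le> 1" for x t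
    unfolding \<Phi>_def
  proof (rule SUP_least)
    fix k :: nat
    show "(INF n\<in>{k..}. \<phi> (yn n) (\<beta> * t)) \<le> \<phi> x t + ennreal (h x + c)"
    proof (rule ennreal_le_epsilon)
      fix e :: real assume e: "0 < e"
      obtain N where N: "inverse (real (Suc N)) < e" using reals_Archimedean[OF e] by blast
      define n where "n = max k N"
      have "1 / real (Suc n) \<le> 1 / real (Suc N)" unfolding n_def
        by (intro divide_left_mono) auto
      then have hn: "h (yn n) < c + e" using yn(2)[of n] N by (simp add: inverse_eq_divide)
      have le2: "\<phi> x t \<le> ennreal 2" using t(2) by (rule order_trans) simp
      have "(INF n\<in>{k..}. \<phi> (yn n) (\<beta> * t)) \<le> \<phi> (yn n) (\<beta> * t)"
        by (rule INF_lower) (simp add: n_def)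
      also have "\<dots> \<le> \<phi> x t + ennreal (h (yn n)) + ennreal (h x)"
      proof -
        have "R (yn n) x" using x by (simp add: X_def)
        then show ?thesis using t le2 unfolding R_def by blast
      qed
      also have "\<dots> = \<phi> x t + ennreal (h (yn n) + h x)"
        using hpos by (simp add: ennreal_plus add.assoc)
      also have "\<dots> \<le> \<phi> x t + ennreal (h x + c + e)"
        using hn by (intro add_left_mono ennreal_leI) simp
      also have "\<dots> = \<phi> x t + ennreal (h x + c) + ennreal e"
        using hpos c0 e by (simp add: ennreal_plus add.assoc add_nonneg_nonneg)
      finally show "(INF n\<in>{k..}. \<phi> (yn n) (\<beta> * t)) \<le> \<phi> x t + ennreal (h x + c) + ennreal e" .
    qed
  qed
  have ynmono: "mono_on {0..} (\<phi> (yn n))" and yn0: "\<phi> (yn n) 0 = 0"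
    and ynainc: "\<forall>s t. 0 < s \<and> s < t \<longrightarrow> \<phi> (yn n) s \<le> ennreal (a * s / t) * \<phi> (yn n) t" for n
    using Gyn[of n] unfolding G_def by auto
  obtain x0 where x0: "X x0"
  proof -
    have "\<exists>x. X x"
    proof (rule ccontr)
      assume nx: "\<not> (\<exists>x. X x)"
      from AEX have "AE y in ?L. False" by eventually_elim (use nx in auto)
      then show False using nonnull by (metis ae_filter_eq_bot_iff eventually_False)
    qed
    then show ?thesis using that by blast
  qed
  have x0G: "(\<phi> x0 \<longlongrightarrow> 0) (at_right 0)" "(\<phi> x0 \<longlongrightarrow> \<infinity>) at_top"
    using x0 unfolding X_def G_def by auto
  have \<Phi>mono: "mono_on {0..} \<Phi>"
  proof (rule mono_onI)
    fix s t :: real assume st: "s \<in> {0..}" "t \<in> {0..}" "s \<le> t"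
    show "\<Phi> s \<le> \<Phi> t" unfolding \<Phi>_def
    proof (rule SUP_mono, rule bexI)
      fix k :: nat
      show "(INF n\<in>{k..}. \<phi> (yn n) s) \<le> (INF n\<in>{k..}. \<phi> (yn n) t)"
      proof (rule INF_mono, rule bexI)
        fix n assume "n \<in> {k..}"
        show "\<phi> (yn n) s \<le> \<phi> (yn n) t" using st by (intro mono_onD[OF ynmono]) auto
      qed
    qed simp
  qed
  have \<Phi>0: "\<Phi> 0 = 0" unfolding \<Phi>_def by (simp add: yn0)
  have \<Phi>ainc: "\<forall>s t. 0 < s \<and> s < t \<longrightarrow> \<Phi> s \<le> ennreal (a * s / t) * \<Phi> t"
  proof (intro allI impI)
    fix s t :: real assume st: "0 < s \<and> s < t"
    have K: "0 < a * s / t" using st a by simp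
    have "\<Phi> s \<le> (SUP k. ennreal (a * s / t) * (INF n\<in>{k..}. \<phi> (yn n) t))"
      unfolding \<Phi>_def
    proof (rule SUP_mono, rule bexI)
      fix k :: nat
      have "(INF n\<in>{k..}. \<phi> (yn n) s) \<le> (INF n\<in>{k..}. ennreal (a * s / t) * \<phi> (yn n) t)"
      proof (rule INF_mono, rule bexI)
        fix n assume "n \<in> {k..}"
        show "\<phi> (yn n) s \<le> ennreal (a * s / t) * \<phi> (yn n) t" using ynainc[of n] st by blast
      qed
      also have "\<dots> = ennreal (a * s / t) * (INF n\<in>{k..}. \<phi> (yn n) t)"
        by (rule INF_mult_ennreal[OF K, symmetric])
      finally show "(INF n\<in>{k..}. \<phi> (yn n) s) \<le> ennreal (a * s / t) * (INF n\<in>{k..}. \<phi> (yn n) t)" .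
    qed simp
    also have "\<dots> = ennreal (a * s / t) * \<Phi> t"
      unfolding \<Phi>_def by (rule SUP_mult_left_ennreal[symmetric])
    finally show "\<Phi> s \<le> ennreal (a * s / t) * \<Phi> t" .
  qed
  have \<Phi>0lim: "(\<Phi> \<longlongrightarrow> 0) (at_right 0)"
  proof -
    have "\<forall>\<^sub>F t in at_right 0. \<phi> x0 t < 1" using order_tendstoD(2)[OF x0G(1)] by simp
    then obtain b where b: "0 < b" "\<And>y. 0 < y \<Longrightarrow> y < b \<Longrightarrow> \<phi> x0 y < 1"
      unfolding eventually_at_right_field by auto
    define t where "t = b / 2"
    have t: "0 < t" "\<phi> x0 t \<le> 1" using b by (auto simp: t_def intro: less_imp_le)
    have "\<Phi> (\<beta> * t) \<le> \<phi> x0 t + ennreal (h x0 + c)" using K2[OF x0] t by simp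
    also have "\<dots> < \<infinity>"
    proof -
      have "\<phi> x0 t < \<infinity>" using le_less_trans[OF t(2)] by simp
      then show ?thesis by (simp add: ennreal_add_eq_top less_top[symmetric])
    qed
    finally have "\<Phi> (\<beta> * t) \<noteq> \<infinity>" by simp
    then show ?thesis using \<beta> t a by (intro tend0[OF \<Phi>ainc, of "\<beta> * t"]) auto
  qed
  have \<Phi>toplim: "(\<Phi> \<longlongrightarrow> \<infinity>) at_top"
  proof -
    have "\<forall>\<^sub>F u in at_top. ennreal (1 + (h x0 + c)) < \<phi> x0 u"
      using order_tendstoD(1)[OF x0G(2)] by simp
    then obtain N where N: "\<And>u. u \<ge> N \<Longrightarrow> ennreal (1 + (h x0 + c)) < \<phi> x0 u"
      unfolding eventually_at_top_linorder by auto
    define t where "t = max N 1 / \<beta>"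
    have t: "0 < t" "\<beta> * t = max N 1" using \<beta> by (auto simp: t_def)
    have big: "ennreal (1 + (h x0 + c)) < \<phi> x0 (\<beta> * t)" using N t(2) by simp
    have "1 < \<Phi> t"
    proof (rule ccontr)
      assume "\<not> 1 < \<Phi> t"
      then have "\<Phi> t \<le> 1" by simp
      then have "\<phi> x0 (\<beta> * t) \<le> \<Phi> t + ennreal (h x0 + c)" using K1[OF x0] t(1) by simp
      also have "\<dots> \<le> 1 + ennreal (h x0 + c)" using \<open>\<Phi> t \<le> 1\<close> by (rule add_right_mono)
      also have "\<dots> = ennreal (1 + (h x0 + c))" using hpos c0 by (simp add: ennreal_plus add_nonneg_nonneg)
      finally show False using big by simp
    qed
    then have "0 < \<Phi> t" using zero_less_one less_trans by blast
    then show ?thesis using a t by (intro tendtop[OF \<Phi>ainc, of t]) auto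
  qed
  have wP: "weak_Phi_const \<Phi>"
    unfolding weak_Phi_const_def
  proof (intro conjI \<Phi>mono \<Phi>0 \<Phi>0lim \<Phi>toplim exI[of _ a] a allI impI)
    fix s t :: real assume st: "0 < s \<and> s < t"
    then show "\<Phi> s / ennreal s \<le> ennreal a * (\<Phi> t / ennreal t)"
      using \<Phi>ainc a by (intro H2) auto
  qed
  have hm: "h \<in> borel_measurable ?L" and hint: "(\<integral>\<^sup>+ x. ennreal (\<bar>h x\<bar> * \<omega> x) \<partial>?L) < \<infinity>"
    using hL unfolding L1w_Linf_def by auto
  have hL': "L1w_Linf \<Omega> \<omega> (\<lambda>x. h x + c)"
    unfolding L1w_Linf_def
  proof (intro conjI exI)
    show "(\<lambda>x. h x + c) \<in> borel_measurable ?L" using hm by measurable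
    have "(\<integral>\<^sup>+ x. ennreal (\<bar>h x + c\<bar> * \<omega> x) \<partial>?L) \<le> (\<integral>\<^sup>+ x. ennreal 2 * ennreal (\<bar>h x\<bar> * \<omega> x) \<partial>?L)"
    proof (rule nn_integral_mono_AE)
      show "AE x in ?L. ennreal (\<bar>h x + c\<bar> * \<omega> x) \<le> ennreal 2 * ennreal (\<bar>h x\<bar> * \<omega> x)"
        using AEX
      proof eventually_elim
        fix x assume "X x"
        then have cx: "c \<le> h x" by (simp add: X_def)
        have "\<bar>h x + c\<bar> * \<omega> x \<le> (2 * \<bar>h x\<bar>) * \<omega> x"
          using cx c0 hpos \<omega>pos by (intro mult_right_mono) auto
        then have "ennreal (\<bar>h x + c\<bar> * \<omega> x) \<le> ennreal (2 * (\<bar>h x\<bar> * \<omega> x))"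
          by (intro ennreal_leI) (simp add: mult.assoc)
        also have "\<dots> = ennreal 2 * ennreal (\<bar>h x\<bar> * \<omega> x)"
          by (rule ennreal_mult) (use \<omega>pos in auto)
        finally show "ennreal (\<bar>h x + c\<bar> * \<omega> x) \<le> ennreal 2 * ennreal (\<bar>h x\<bar> * \<omega> x)" .
      qed
    qed
    also have "\<dots> = ennreal 2 * (\<integral>\<^sup>+ x. ennreal (\<bar>h x\<bar> * \<omega> x) \<partial>?L)"
      by (rule nn_integral_cmult) (use hm \<omega>m in measurable)
    also have "\<dots> < \<infinity>" using hint by (simp add: ennreal_mult_less_top)
    finally show "(\<integral>\<^sup>+ x. ennreal (\<bar>h x + c\<bar> * \<omega> x) \<partial>?L) < \<infinity>" .
    show "AE x in ?L. \<bar>h x + c\<bar> \<le> M + c" using M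
      by eventually_elim (use hpos c0 in auto)
  qed
  show ?thesis
  proof (intro exI[of _ \<Phi>] exI[of _ "\<lambda>x. h x + c"] exI[of _ \<beta>] conjI wP hL' \<beta>)
    show "\<forall>x. 0 \<le> h x + c" using hpos c0 by (simp add: add_nonneg_nonneg)
    show "AE x in ?L. \<forall>t\<ge>0. (\<Phi> t \<le> 1 \<longrightarrow> \<phi> x (\<beta> * t) \<le> \<Phi> t + ennreal (h x + c)) \<and>
          (\<phi> x t \<le> 1 \<longrightarrow> \<Phi> (\<beta> * t) \<le> \<phi> x t + ennreal (h x + c))"
      using AEX by eventually_elim (use K1 K2 in auto)
  qed
qed

lemma weak_Phi_id: "weak_Phi_const (\<lambda>t. ennreal t)"
  unfolding weak_Phi_const_def
proof (intro conjI exI[of _ 1] allI impI)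
  show "mono_on {0..} (\<lambda>t. ennreal t)" by (rule mono_onI) (simp add: ennreal_leI)
  show "ennreal 0 = 0" by simp
  have "((\<lambda>t. ennreal t) \<longlongrightarrow> ennreal 0) (at_right 0)"
    by (intro tendsto_ennrealI tendsto_ident_at)
  then show "((\<lambda>t. ennreal t) \<longlongrightarrow> 0) (at_right 0)" by simp
  show "((\<lambda>t. ennreal t) \<longlongrightarrow> \<infinity>) at_top"
    by (simp add: ennreal_tendsto_top_eq_at_top filterlim_ident)
  fix s t :: real assume st: "0 < s \<and> s < t"
  then show "ennreal s / ennreal s \<le> ennreal 1 * (ennreal t / ennreal t)"
    by (simp add: divide_ennreal)
qed simp

theorem lemma2p4:
  fixes \<Omega> :: "'a::euclidean_space set" and \<omega> :: "'a \<Rightarrow> real"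
    and \<phi> :: "'a \<Rightarrow> real \<Rightarrow> ennreal"
  assumes "open \<Omega>" and "weight \<omega>" and "Phi_w \<Omega> \<phi>"
  shows "A2w \<Omega> \<omega> \<phi> \<longleftrightarrow>
    (\<exists>\<phi>inf h \<beta>. weak_Phi_const \<phi>inf \<and> L1w_Linf \<Omega> \<omega> h \<and> (\<forall>x. 0 \<le> h x) \<and>
       0 < \<beta> \<and> \<beta> \<le> 1 \<and>
       (AE x in lebesgue_on \<Omega>. \<forall>t\<ge>0.
          (\<phi>inf t \<le> 1 \<longrightarrow> \<phi> x (\<beta> * t) \<le> \<phi>inf t + ennreal (h x)) \<and>
          (\<phi> x t \<le> 1 \<longrightarrow> \<phi>inf (\<beta> * t) \<le> \<phi> x t + ennreal (h x))))"
proof -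
  let ?L = "lebesgue_on \<Omega>"
  have \<Omega>m: "\<Omega> \<in> sets lebesgue" using assms(1) by (simp add: borel_open)
  have sf: "sigma_finite_measure ?L" by (rule sf_on[OF \<Omega>m])
  have \<omega>m: "\<omega> \<in> borel_measurable ?L"
    using weight_meas[OF assms(2)] by (rule measurable_restrict_space1)
  have \<omega>pos: "\<forall>x. 0 \<le> \<omega> x" using assms(2) unfolding weight_def by auto
  obtain a where a: "1 \<le> a" and aI: "AE x in ?L. \<forall>s t. 0 < s \<and> s < t \<longrightarrow>
       \<phi> x s / ennreal (s powr 1) \<le> ennreal a * (\<phi> x t / ennreal (t powr 1))"
    using assms(3) unfolding Phi_w_def aInc_def by blast
  have pre: "AE x in ?L. mono_on {0..} (\<phi> x) \<and> \<phi> x 0 = 0 \<and>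
        (\<phi> x \<longlongrightarrow> 0) (at_right 0) \<and> (\<phi> x \<longlongrightarrow> \<infinity>) at_top"
    using assms(3) unfolding Phi_w_def Phi_pre_def by blast
  have good: "AE x in ?L. mono_on {0..} (\<phi> x) \<and> \<phi> x 0 = 0 \<and>
        (\<phi> x \<longlongrightarrow> 0) (at_right 0) \<and> (\<phi> x \<longlongrightarrow> \<infinity>) at_top \<and>
        (\<forall>s t. 0 < s \<and> s < t \<longrightarrow> \<phi> x s \<le> ennreal (a * s / t) * \<phi> x t)"
    using pre aI
  proof eventually_elim
    case (elim x)
    have "\<phi> x s \<le> ennreal (a * s / t) * \<phi> x t" if st: "0 < s" "s < t" for s t
    proof (rule H1)
      show "\<phi> x s / ennreal s \<le> ennreal a * (\<phi> x t / ennreal t)"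
        using elim(2) st by auto
    qed (use st a in auto)
    then show ?case using elim(1) by blast
  qed
  show ?thesis
  proof
    assume A2: "A2w \<Omega> \<omega> \<phi>"
    show "\<exists>\<phi>inf h \<beta>. weak_Phi_const \<phi>inf \<and> L1w_Linf \<Omega> \<omega> h \<and> (\<forall>x. 0 \<le> h x) \<and>
       0 < \<beta> \<and> \<beta> \<le> 1 \<and>
       (AE x in lebesgue_on \<Omega>. \<forall>t\<ge>0.
          (\<phi>inf t \<le> 1 \<longrightarrow> \<phi> x (\<beta> * t) \<le> \<phi>inf t + ennreal (h x)) \<and>
          (\<phi> x t \<le> 1 \<longrightarrow> \<phi>inf (\<beta> * t) \<le> \<phi> x t + ennreal (h x)))"
    proof (cases "emeasure ?L (space ?L) = 0")
      case False
      show ?thesis by (rule dir_fwd[OF sf \<omega>m \<omega>pos good a A2 False])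
    next
      case True
      have AEall: "AE x in ?L. P x" for P
        by (rule AE_I[of _ _ "space ?L"]) (use True in auto)
      have L0: "L1w_Linf \<Omega> \<omega> (\<lambda>x. 0)" unfolding L1w_Linf_def by auto
      show ?thesis
        by (intro exI[of _ "\<lambda>t. ennreal t"] exI[of _ "\<lambda>x. 0"] exI[of _ 1] conjI weak_Phi_id L0 AEall) auto
    qed
  next
    assume "\<exists>\<phi>inf h \<beta>. weak_Phi_const \<phi>inf \<and> L1w_Linf \<Omega> \<omega> h \<and> (\<forall>x. 0 \<le> h x) \<and>
       0 < \<beta> \<and> \<beta> \<le> 1 \<and>
       (AE x in lebesgue_on \<Omega>. \<forall>t\<ge>0.
          (\<phi>inf t \<le> 1 \<longrightarrow> \<phi> x (\<beta> * t) \<le> \<phi>inf t + ennreal (h x)) \<and>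
          (\<phi> x t \<le> 1 \<longrightarrow> \<phi>inf (\<beta> * t) \<le> \<phi> x t + ennreal (h x)))"
    then obtain \<psi> h \<beta> where wp: "weak_Phi_const \<psi>" and hL: "L1w_Linf \<Omega> \<omega> h" and hpos: "\<forall>x. 0 \<le> h x"
      and \<beta>: "0 < \<beta>" "\<beta> \<le> 1" and E: "AE x in lebesgue_on \<Omega>. \<forall>t\<ge>0.
          (\<psi> t \<le> 1 \<longrightarrow> \<phi> x (\<beta> * t) \<le> \<psi> t + ennreal (h x)) \<and>
          (\<phi> x t \<le> 1 \<longrightarrow> \<psi> (\<beta> * t) \<le> \<phi> x t + ennreal (h x))"
      by blast
    have good': "AE x in ?L. mono_on {0..} (\<phi> x) \<and> \<phi> x 0 = 0 \<and>
        (\<forall>s t. 0 < s \<and> s < t \<longrightarrow> \<phi> x s \<le> ennreal (a * s / t) * \<phi> x t)"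
      using good by eventually_elim blast
    show "A2w \<Omega> \<omega> \<phi>" by (rule dir_back[OF sf good' a wp hL hpos \<beta> E])
  qed
qed
end
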